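(* Let $f\colon[n]^2\to\{0,1\}$ be $2$-column-wise-monotone with $f(1,j)=f(n,j)=0$ for all $j\in[n]$. Then $\mathrm{dist}(f,\mathcal{M}^{(2)}_2)\leq L_1(\overline{f},\mathcal{M}_1)+L_1(\underline{f},\mathcal{M}_1)$. In particular, if $f$ is $\varepsilon$-far from $2$-monotone, then at least one of the two sequences $\underline{f},\overline{f}$ satisfies $L_1(\cdot,\mathcal{M}_1)\geq\varepsilon/2$.
   Context: $[n]^2$ is ordered coordinatewise. $f\colon[n]^2\to\{0,1\}$ is $2$-monotone if there are no $x\preceq y\preceq z$ with $(f(x),f(y),f(z))=(1,0,1)$; $\mathcal{M}^{(2)}_2$ denotes the set of $2$-monotone functions on $[n]^2$ and $\mathrm{dist}(f,\mathcal{M}^{(2)}_2)$ the minimum normalized Hamming distance from $f$ to it. $f$ is $2$-column-wise-monotone if each column map $i\mapsto f(i,j)$ has no $a\leq b\leq c$ with values $1,0,1$. For a column $j$ on which $f$ is not constant, $\underline{f}_j=\min\{i: f(i,j)\neq f(1,j)\}-1$ and $\overline{f}_j=\max\{i: f(i,j)\neq f(n,j)\}+1$; otherwise $\underline{f}_j=\overline{f}_j=1$. These sequences are viewed as functions $[n]\to[n]$. For $a,b\colon[n]\to[n]$, $L_1(a,b)=\frac{1}{n^2}\sum_{j=1}^n|a(j)-b(j)|$, and $L_1(a,\mathcal{M}_1)$ is the minimum of $L_1(a,b)$ over non-increasing $b\colon[n]\to[n]$. *)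

theory Defs
  imports Complex_Main
begin

text \<open>Functions f : [n]^2 -> {0,1} are modelled as f :: nat => nat => bool,
  f i j = True meaning f(i,j) = 1; only values on {1..n} x {1..n} matter.\<close>

definition leq2 :: "nat \<times> nat \<Rightarrow> nat \<times> nat \<Rightarrow> bool" where
  "leq2 x y \<longleftrightarrow> fst x \<le> fst y \<and> snd x \<le> snd y"

definition grid :: "nat \<Rightarrow> (nat \<times> nat) set" where
  "grid n = {1..n} \<times> {1..n}"

definition two_monotone :: "nat \<Rightarrow> (nat \<Rightarrow> nat \<Rightarrow> bool) \<Rightarrow> bool" where
  "two_monotone n f \<longleftrightarrow>
     (\<forall>x\<in>grid n. \<forall>y\<in>grid n. \<forall>z\<in>grid n.
        leq2 x y \<and> leq2 y z \<longrightarrow>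
        \<not> (f (fst x) (snd x) \<and> \<not> f (fst y) (snd y) \<and> f (fst z) (snd z)))"

definition two_colwise_monotone :: "nat \<Rightarrow> (nat \<Rightarrow> nat \<Rightarrow> bool) \<Rightarrow> bool" where
  "two_colwise_monotone n f \<longleftrightarrow>
     (\<forall>j\<in>{1..n}. \<forall>a\<in>{1..n}. \<forall>b\<in>{1..n}. \<forall>c\<in>{1..n}.
        a \<le> b \<and> b \<le> c \<longrightarrow> \<not> (f a j \<and> \<not> f b j \<and> f c j))"

definition dist_mono2 :: "nat \<Rightarrow> (nat \<Rightarrow> nat \<Rightarrow> bool) \<Rightarrow> real" where
  "dist_mono2 n f = Min {real (card {x\<in>grid n. f (fst x) (snd x) \<noteq> g (fst x) (snd x)}) / real n ^ 2
                         | g. two_monotone n g}"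

definition col_const :: "nat \<Rightarrow> (nat \<Rightarrow> nat \<Rightarrow> bool) \<Rightarrow> nat \<Rightarrow> bool" where
  "col_const n f j \<longleftrightarrow> (\<forall>i\<in>{1..n}. f i j = f 1 j)"

definition lower_seq :: "nat \<Rightarrow> (nat \<Rightarrow> nat \<Rightarrow> bool) \<Rightarrow> nat \<Rightarrow> nat" where
  "lower_seq n f j = (if col_const n f j then 1
                      else Min {i\<in>{1..n}. f i j \<noteq> f 1 j} - 1)"

definition upper_seq :: "nat \<Rightarrow> (nat \<Rightarrow> nat \<Rightarrow> bool) \<Rightarrow> nat \<Rightarrow> nat" where
  "upper_seq n f j = (if col_const n f j then 1
                      else Max {i\<in>{1..n}. f i j \<noteq> f n j} + 1)"

definition L1 :: "nat \<Rightarrow> (nat \<Rightarrow> nat) \<Rightarrow> (nat \<Rightarrow> nat) \<Rightarrow> real" where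
  "L1 n a b = (\<Sum>j=1..n. \<bar>real (a j) - real (b j)\<bar>) / real n ^ 2"

definition nonincr_seq :: "nat \<Rightarrow> (nat \<Rightarrow> nat) \<Rightarrow> bool" where
  "nonincr_seq n b \<longleftrightarrow> (\<forall>j\<in>{1..n}. b j \<in> {1..n}) \<and>
     (\<forall>j1\<in>{1..n}. \<forall>j2\<in>{1..n}. j1 \<le> j2 \<longrightarrow> b j2 \<le> b j1)"

definition L1_M1 :: "nat \<Rightarrow> (nat \<Rightarrow> nat) \<Rightarrow> real" where
  "L1_M1 n a = Min {L1 n a b | b. nonincr_seq n b}"

end

theory Submission
  imports Defs
begin

definition nad :: "nat \<Rightarrow> nat \<Rightarrow> nat" where
  "nad x y = (if y \<le> x then x - y else y - x)"

lemma nad_real: "real (nad x y) = \<bar>real x - real y\<bar>"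
  by (auto simp: nad_def of_nat_diff)

lemma L1_nat: "L1 n a b = real (\<Sum>j=1..n. nad (a j) (b j)) / real n ^ 2"
  by (simp add: L1_def nad_real)

lemma L1_finite: "finite {L1 n a b | b. nonincr_seq n b}"
proof -
  let ?K = "\<Sum>j=1..n. a j + n"
  have "{L1 n a b | b. nonincr_seq n b} \<subseteq> (\<lambda>k. real k / real n ^ 2) ` {..?K}"
  proof
    fix x assume "x \<in> {L1 n a b | b. nonincr_seq n b}"
    then obtain b where b: "nonincr_seq n b" and x: "x = L1 n a b" by auto
    have "(\<Sum>j=1..n. nad (a j) (b j)) \<le> ?K"
    proof (rule sum_mono)
      fix j assume "j \<in> {1..n}"
      with b have "b j \<le> n" unfolding nonincr_seq_def by auto
      then show "nad (a j) (b j) \<le> a j + n" by (auto simp: nad_def)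
    qed
    then show "x \<in> (\<lambda>k. real k / real n ^ 2) ` {..?K}" unfolding x L1_nat
      by (intro imageI) auto
  qed
  then show ?thesis by (rule finite_subset) auto
qed

lemma L1_M1_attained: "\<exists>b. nonincr_seq n b \<and> L1_M1 n a = L1 n a b"
proof -
  have ne: "nonincr_seq n (\<lambda>_. 1)" by (auto simp: nonincr_seq_def)
  have "L1_M1 n a \<in> {L1 n a b | b. nonincr_seq n b}"
    unfolding L1_M1_def using L1_finite ne by (intro Min_in) auto
  then show ?thesis by auto
qed

lemma dist_le:
  assumes "two_monotone n g"
  shows "dist_mono2 n f \<le> real (card {x\<in>grid n. f (fst x) (snd x) \<noteq> g (fst x) (snd x)}) / real n ^ 2"
proof -
  have fg: "finite (grid n)" by (simp add: grid_def)
  have "{real (card {x\<in>grid n. f (fst x) (snd x) \<noteq> g (fst x) (snd x)}) / real n ^ 2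
                         | g. two_monotone n g} \<subseteq> (\<lambda>k. real k / real n ^ 2) ` {..card (grid n)}"
  proof
    fix y assume "y \<in> {real (card {x\<in>grid n. f (fst x) (snd x) \<noteq> g (fst x) (snd x)}) / real n ^ 2
                         | g. two_monotone n g}"
    then obtain h where y: "y = real (card {x\<in>grid n. f (fst x) (snd x) \<noteq> h (fst x) (snd x)}) / real n ^ 2" by auto
    have "card {x\<in>grid n. f (fst x) (snd x) \<noteq> h (fst x) (snd x)} \<le> card (grid n)"
      using fg by (intro card_mono) auto
    then show "y \<in> (\<lambda>k. real k / real n ^ 2) ` {..card (grid n)}" using y by auto
  qed
  then have "finite {real (card {x\<in>grid n. f (fst x) (snd x) \<noteq> g (fst x) (snd x)}) / real n ^ 2
                         | g. two_monotone n g}" by (rule finite_subset) auto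
  then show ?thesis unfolding dist_mono2_def using assms by (intro Min_le) auto
qed

lemma column_char:
  assumes cm: "two_colwise_monotone n f"
    and z: "\<not> f 1 j" and zn: "\<not> f n j" and j: "j \<in> {1..n}" and i: "i \<in> {1..n}"
  shows "f i j \<longleftrightarrow> lower_seq n f j < i \<and> i < upper_seq n f j"
proof (cases "col_const n f j")
  case True
  then show ?thesis using z i by (auto simp: col_const_def lower_seq_def upper_seq_def)
next
  case False
  then obtain i0 where i0: "i0 \<in> {1..n}" "f i0 j" using z by (auto simp: col_const_def)
  define S where "S = {i\<in>{1..n}. f i j}"
  have S1: "{i\<in>{1..n}. f i j \<noteq> f 1 j} = S" using z by (auto simp: S_def)
  have fS: "finite S" and neS: "S \<noteq> {}" using i0 by (auto simp: S_def)
  have L: "lower_seq n f j = Min S - 1" using False S1 by (simp add: lower_seq_def)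
  have mS: "Min S \<in> S" "Max S \<in> S" using fS neS by auto
  have Sn: "{i\<in>{1..n}. f i j \<noteq> f n j} = S" using zn by (auto simp: S_def)
  have U: "upper_seq n f j = Max S + 1" using False Sn by (simp add: upper_seq_def)
  have m1: "Min S \<ge> 1" using mS by (auto simp: S_def)
  show ?thesis
  proof
    assume "f i j"
    then have "i \<in> S" using i by (auto simp: S_def)
    then have "Min S \<le> i" "i \<le> Max S" using fS by auto
    then show "lower_seq n f j < i \<and> i < upper_seq n f j" using L U m1 by auto
  next
    assume "lower_seq n f j < i \<and> i < upper_seq n f j"
    then have a: "Min S \<le> i" "i \<le> Max S" using L U m1 by auto
    have "f (Min S) j" "f (Max S) j" "Min S \<in> {1..n}" "Max S \<in> {1..n}" using mS by (auto simp: S_def)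
    then show "f i j" using cm j i a unfolding two_colwise_monotone_def by blast
  qed
qed

lemma sym_card: "card {i\<in>{1..n}. (a<i \<and> i<b) \<noteq> (a'<i \<and> i<b')} \<le> nad a a' + nad b b'"
proof -
  have "{i\<in>{1..n}. (a<i \<and> i<b) \<noteq> (a'<i \<and> i<b')} \<subseteq> {min a a'<..max a a'} \<union> {min b b'..<max b b'}"
    by auto
  then have "card {i\<in>{1..n}. (a<i \<and> i<b) \<noteq> (a'<i \<and> i<b')} \<le> card ({min a a'<..max a a'} \<union> {min b b'..<max b b'})"
    by (intro card_mono) auto
  also have "\<dots> \<le> card {min a a'<..max a a'} + card {min b b'..<max b b'}" by (rule card_Un_le)
  also have "\<dots> = nad a a' + nad b b'" by (auto simp: nad_def)
  finally show ?thesis .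
qed

lemma card_grid_split:
  "card {x\<in>grid n. P (fst x) (snd x)} = (\<Sum>j\<in>{1..n}. card {i\<in>{1..n}. P i j})"
proof -
  have e: "{x\<in>grid n. P (fst x) (snd x)} = (\<lambda>(j,i). (i,j)) ` (SIGMA j:{1..n}. {i\<in>{1..n}. P i j})"
    by (auto simp: grid_def image_iff)
  have inj: "inj_on (\<lambda>(j::nat,i::nat). (i,j)) A" for A by (auto simp: inj_on_def)
  show ?thesis unfolding e by (simp add: card_image[OF inj])
qed

theorem lemma5p3:
  fixes n :: nat and f :: "nat \<Rightarrow> nat \<Rightarrow> bool"
  assumes "two_colwise_monotone n f"
    and "\<forall>j\<in>{1..n}. \<not> f 1 j \<and> \<not> f n j"
  shows "dist_mono2 n f \<le> L1_M1 n (upper_seq n f) + L1_M1 n (lower_seq n f)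
         \<and> (\<forall>\<epsilon>::real. dist_mono2 n f \<ge> \<epsilon> \<longrightarrow>
              L1_M1 n (lower_seq n f) \<ge> \<epsilon> / 2 \<or> L1_M1 n (upper_seq n f) \<ge> \<epsilon> / 2)"
proof -
  let ?L = "lower_seq n f" and ?U = "upper_seq n f"
  obtain bu where bu: "nonincr_seq n bu" "L1_M1 n ?U = L1 n ?U bu" using L1_M1_attained by blast
  obtain bl where bl: "nonincr_seq n bl" "L1_M1 n ?L = L1 n ?L bl" using L1_M1_attained by blast
  define g where "g = (\<lambda>i j. bl j < i \<and> i < bu j)"
  have gm: "two_monotone n g"
    unfolding two_monotone_def
  proof (intro ballI impI)
    fix x y z assume xyz: "x \<in> grid n" "y \<in> grid n" "z \<in> grid n" and le: "leq2 x y \<and> leq2 y z"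
    obtain x1 x2 y1 y2 z1 z2 where p: "x = (x1,x2)" "y = (y1,y2)" "z = (z1,z2)" by (cases x, cases y, cases z) auto
    have r: "x2 \<in> {1..n}" "y2 \<in> {1..n}" "z2 \<in> {1..n}" "x2 \<le> y2" "y2 \<le> z2"
      using xyz le unfolding p grid_def leq2_def by auto
    have "bl (snd y) \<le> bl (snd x)" using bl(1) r unfolding nonincr_seq_def p by simp
    moreover have "bu (snd z) \<le> bu (snd y)" using bu(1) r unfolding nonincr_seq_def p by simp
    ultimately show "\<not> (g (fst x) (snd x) \<and> \<not> g (fst y) (snd y) \<and> g (fst z) (snd z))"
      using le unfolding g_def leq2_def by auto
  qed
  have col: "card {i\<in>{1..n}. f i j \<noteq> g i j} \<le> nad (?L j) (bl j) + nad (?U j) (bu j)"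
    if j: "j \<in> {1..n}" for j
  proof -
    have z: "\<not> f 1 j" "\<not> f n j" using assms(2) j by auto
    have "{i\<in>{1..n}. f i j \<noteq> g i j} = {i\<in>{1..n}. (?L j<i \<and> i< ?U j) \<noteq> (bl j<i \<and> i<bu j)}"
    proof (rule Collect_cong)
      fix i
      show "(i \<in> {1..n} \<and> f i j \<noteq> g i j) = (i \<in> {1..n} \<and> (?L j<i \<and> i< ?U j) \<noteq> (bl j<i \<and> i<bu j))"
        using column_char[OF assms(1) z j, of i] unfolding g_def by blast
    qed
    then show ?thesis using sym_card by simp
  qed
  have "card {x\<in>grid n. f (fst x) (snd x) \<noteq> g (fst x) (snd x)}
       = (\<Sum>j\<in>{1..n}. card {i\<in>{1..n}. f i j \<noteq> g i j})" by (rule card_grid_split)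
  also have "\<dots> \<le> (\<Sum>j\<in>{1..n}. nad (?L j) (bl j) + nad (?U j) (bu j))"
    by (rule sum_mono) (rule col)
  also have "\<dots> = (\<Sum>j=1..n. nad (?U j) (bu j)) + (\<Sum>j=1..n. nad (?L j) (bl j))"
    by (simp add: sum.distrib)
  finally have c: "real (card {x\<in>grid n. f (fst x) (snd x) \<noteq> g (fst x) (snd x)})
     \<le> real (\<Sum>j=1..n. nad (?U j) (bu j)) + real (\<Sum>j=1..n. nad (?L j) (bl j))"
    unfolding of_nat_add[symmetric] of_nat_le_iff .
  have "dist_mono2 n f \<le> real (card {x\<in>grid n. f (fst x) (snd x) \<noteq> g (fst x) (snd x)}) / real n ^ 2"
    by (rule dist_le[OF gm])
  also have "\<dots> \<le> (real (\<Sum>j=1..n. nad (?U j) (bu j)) + real (\<Sum>j=1..n. nad (?L j) (bl j))) / real n ^ 2"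
    using c by (rule divide_right_mono) simp
  also have "\<dots> = L1_M1 n ?U + L1_M1 n ?L"
    unfolding bu(2) bl(2) L1_nat by (rule add_divide_distrib)
  finally have main: "dist_mono2 n f \<le> L1_M1 n ?U + L1_M1 n ?L" .
  then show ?thesis by linarith
qed

end
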